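(* In the Mallows setting: - $W(N,0)=\theta^{N-1}[N-1]_\theta!$ for all $N\ge1$; - for all $N\ge2$ and $1\le k\le N-1$, $$W(N,k)=\theta^{N-k-1}\,[N-1]_\theta!\,\sum_{i=k}^{N-1}\frac{[k]_\theta}{[i]_\theta}.$$
   Context: Permutations of $\{1,\dots,N\}$ are written in one-line notation; $\mathfrak S_N$ is the set of all of them. An entry $\pi_j$ is a left-to-right maximum if $\pi_j>\pi_i$ for all $i<j$; $\mathrm{inv}(\pi)$ is the number of pairs $i<j$ with $\pi_i>\pi_j$. Let $\theta>0$. For $0\le k\le N-1$, a permutation $\pi\in\mathfrak S_N$ is $k$-winnable if the first index $j>k$ such that $\pi_j$ is a left-to-right maximum satisfies $\pi_j=N$. Mallows setting: - $W(N,k)=\sum_{k\text{-winnable }\pi\in\mathfrak S_N}\theta^{\mathrm{inv}(\pi)}$; - $[m]_\theta=1+\theta+\cdots+\theta^{m-1}$; - $[m]_\theta!=[1]_\theta\cdots[m]_\theta$, with $[0]_\theta!=1$. *)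

theory Defs
  imports Complex_Main "HOL-Combinatorics.Permutations"
begin

text \<open>Permutations of {1..N} in one-line notation: pi_j = p j, with p permutes {1..N}.\<close>

definition perms :: "nat \<Rightarrow> (nat \<Rightarrow> nat) set" where
  "perms N = {p. p permutes {1..N}}"

definition lr_max :: "(nat \<Rightarrow> nat) \<Rightarrow> nat \<Rightarrow> bool" where
  "lr_max p j \<longleftrightarrow> (\<forall>i\<in>{1..<j}. p i < p j)"

definition inv_count :: "nat \<Rightarrow> (nat \<Rightarrow> nat) \<Rightarrow> nat" where
  "inv_count N p = card {(i, j). 1 \<le> i \<and> i < j \<and> j \<le> N \<and> p i > p j}"

definition winnable :: "nat \<Rightarrow> nat \<Rightarrow> (nat \<Rightarrow> nat) \<Rightarrow> bool" where
  "winnable N k p \<longleftrightarrow>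
     (\<exists>j. k < j \<and> j \<le> N \<and> lr_max p j \<and> p j = N \<and>
          (\<forall>j'. k < j' \<and> j' < j \<longrightarrow> \<not> lr_max p j'))"

definition W :: "real \<Rightarrow> nat \<Rightarrow> nat \<Rightarrow> real" where
  "W \<theta> N k = (\<Sum>p\<in>{p\<in>perms N. winnable N k p}. \<theta> ^ inv_count N p)"

definition qint :: "real \<Rightarrow> nat \<Rightarrow> real" where
  "qint \<theta> m = (\<Sum>i<m. \<theta> ^ i)"

definition qfact :: "real \<Rightarrow> nat \<Rightarrow> real" where
  "qfact \<theta> m = (\<Prod>i\<in>{1..m}. qint \<theta> i)"

end

theory Submission
  imports Defs
begin


definition ins :: "nat \<Rightarrow> (nat\<Rightarrow>nat) \<Rightarrow> nat \<Rightarrow> nat \<Rightarrow> nat" where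
"ins n q v i = (if 1 \<le> i \<and> i \<le> n then (if q i < v then q i else Suc (q i)) else if i = Suc n then v else i)"

definition dq :: "nat \<Rightarrow> (nat\<Rightarrow>nat) \<Rightarrow> nat \<Rightarrow> nat" where
"dq n p i = (if 1 \<le> i \<and> i \<le> n then (if p i < p (Suc n) then p i else p i - 1) else i)"

lemma perm_intro:
  assumes "finite S" "inj_on f S" "\<And>x. x\<in>S \<Longrightarrow> f x \<in> S" "\<And>x. x\<notin>S \<Longrightarrow> f x = x"
  shows "f permutes S"
proof (rule bij_imp_permutes)
  have "f ` S = S" using endo_inj_surj[OF assms(1) _ assms(2)] assms(3) by blast
  then show "bij_betw f S S" using assms(2) by (simp add: bij_betw_def)
qed (use assms in auto)

lemma permD:
  assumes "q \<in> perms n"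
  shows "\<And>i. i \<in> {1..n} \<Longrightarrow> q i \<in> {1..n}" "\<And>i. i \<notin> {1..n} \<Longrightarrow> q i = i"
    "\<And>i j. i \<in> {1..n} \<Longrightarrow> j \<in> {1..n} \<Longrightarrow> q i = q j \<Longrightarrow> i = j"
    "\<And>x. x \<in> {1..n} \<Longrightarrow> \<exists>i\<in>{1..n}. q i = x"
proof -
  have p: "q permutes {1..n}" using assms by (simp add: perms_def)
  show "\<And>i. i \<in> {1..n} \<Longrightarrow> q i \<in> {1..n}" using permutes_in_image[OF p] by blast
  show "\<And>i. i \<notin> {1..n} \<Longrightarrow> q i = i" using permutes_not_in[OF p] by blast
  show "\<And>i j. i \<in> {1..n} \<Longrightarrow> j \<in> {1..n} \<Longrightarrow> q i = q j \<Longrightarrow> i = j"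
    using permutes_inj_on[OF p] by (meson inj_onD)
  show "\<And>x. x \<in> {1..n} \<Longrightarrow> \<exists>i\<in>{1..n}. q i = x"
    using permutes_image[OF p] by (metis imageE)
qed

lemma ins_perm:
  assumes q: "q \<in> perms n" and v: "v \<in> {1..Suc n}"
  shows "ins n q v \<in> perms (Suc n)"
proof -
  note D = permD[OF q]
  have "ins n q v permutes {1..Suc n}"
  proof (rule perm_intro)
    show "inj_on (ins n q v) {1..Suc n}"
    proof (rule inj_onI)
      fix i j assume i: "i \<in> {1..Suc n}" and j: "j \<in> {1..Suc n}" and e: "ins n q v i = ins n q v j"
      show "i = j"
      proof (cases "i \<le> n")
        case True
        note qi = D(1)[of i]
        show ?thesis
        proof (cases "j \<le> n")
          case True
          then show ?thesis using \<open>i \<le> n\<close> i j e D(3)[of i j] D(1)[of i] D(1)[of j]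
            by (auto simp: ins_def split: if_splits)
        next
          case False
          then show ?thesis using \<open>i \<le> n\<close> i j e
            by (auto simp: ins_def split: if_splits)
        qed
      next
        case False
        then show ?thesis using i j e by (auto simp: ins_def split: if_splits)
      qed
    qed
    show "\<And>x. x \<in> {1..Suc n} \<Longrightarrow> ins n q v x \<in> {1..Suc n}"
      using D(1) v by (auto simp: ins_def)
  qed (auto simp: ins_def)
  then show ?thesis by (simp add: perms_def)
qed

lemma dq_perm:
  assumes p: "p \<in> perms (Suc n)"
  shows "dq n p \<in> perms n" "p (Suc n) \<in> {1..Suc n}"
proof -
  note D = permD[OF p]
  show v: "p (Suc n) \<in> {1..Suc n}" using D(1) by simp
  have ne: "\<And>i. i \<in> {1..n} \<Longrightarrow> p i \<noteq> p (Suc n)" using D(3) by fastforce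
  have "dq n p permutes {1..n}"
  proof (rule perm_intro)
    show "inj_on (dq n p) {1..n}"
    proof (rule inj_onI)
      fix i j assume i: "i \<in> {1..n}" and j: "j \<in> {1..n}" and e: "dq n p i = dq n p j"
      have "p i = p j" using e i j ne[of i] ne[of j] D(1)[of i] D(1)[of j]
        by (auto simp: dq_def split: if_splits)
      then show "i = j" using D(3) i j by auto
    qed
    show "\<And>x. x \<in> {1..n} \<Longrightarrow> dq n p x \<in> {1..n}"
    proof -
      fix x assume x: "x \<in> {1..n}"
      then show "dq n p x \<in> {1..n}" using ne[of x] D(1)[of x] v by (auto simp: dq_def)
    qed
  qed (auto simp: dq_def)
  then show "dq n p \<in> perms n" by (simp add: perms_def)
qed

lemma dq_ins:
  assumes q: "q \<in> perms n" and v: "v \<in> {1..Suc n}"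
  shows "dq n (ins n q v) = q" "ins n q v (Suc n) = v"
proof -
  note D = permD[OF q]
  show "ins n q v (Suc n) = v" by (simp add: ins_def)
  show "dq n (ins n q v) = q"
    by (rule ext) (use D(2) in \<open>auto simp: dq_def ins_def\<close>)
qed

lemma ins_dq:
  assumes p: "p \<in> perms (Suc n)"
  shows "ins n (dq n p) (p (Suc n)) = p"
proof -
  note D = permD[OF p]
  have ne: "\<And>i. i \<in> {1..n} \<Longrightarrow> p i \<noteq> p (Suc n)" using D(3) by fastforce
  show ?thesis
  proof (rule ext)
    fix i show "ins n (dq n p) (p (Suc n)) i = p i"
      using ne[of i] D(2)[of i] by (auto simp: dq_def ins_def)
  qed
qed

lemma decomp:
  "(\<Sum>p\<in>perms (Suc n). f p) = (\<Sum>q\<in>perms n. \<Sum>v\<in>{1..Suc n}. f (ins n q v))"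
proof -
  have "(\<Sum>p\<in>perms (Suc n). f p) = (\<Sum>(q,v)\<in>perms n \<times> {1..Suc n}. f (ins n q v))"
    by (rule sum.reindex_bij_witness[where i = "\<lambda>(q,v). ins n q v" and j = "\<lambda>p. (dq n p, p (Suc n))"])
       (auto simp: dq_perm ins_dq ins_perm dq_ins, (drule dq_perm(2), simp)+)
  also have "\<dots> = (\<Sum>q\<in>perms n. \<Sum>v\<in>{1..Suc n}. f (ins n q v))"
    by (rule sum.cartesian_product[symmetric])
  finally show ?thesis .
qed



lemma ins_ord:
  assumes "i \<in> {1..n}" "j \<in> {1..n}"
  shows "ins n q v i < ins n q v j \<longleftrightarrow> q i < q j"
  using assms by (auto simp: ins_def)

lemma inv_ins:
  assumes q: "q \<in> perms n" and v: "v \<in> {1..Suc n}"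
  shows "inv_count (Suc n) (ins n q v) = inv_count n q + (Suc n - v)"
proof -
  note D = permD[OF q]
  let ?p = "ins n q v"
  let ?A = "{(i, j). 1 \<le> i \<and> i < j \<and> j \<le> n \<and> q i > q j}"
  let ?C = "{i\<in>{1..n}. v \<le> q i}"
  have eq: "{(i, j). 1 \<le> i \<and> i < j \<and> j \<le> Suc n \<and> ?p i > ?p j} = ?A \<union> (\<lambda>i. (i, Suc n)) ` ?C"
  proof (rule set_eqI, clarify)
    fix i j
    show "((i, j) \<in> {(i, j). 1 \<le> i \<and> i < j \<and> j \<le> Suc n \<and> ?p i > ?p j}) = ((i, j) \<in> ?A \<union> (\<lambda>i. (i, Suc n)) ` ?C)"
    proof (cases "j \<le> n")
      case True
      then show ?thesis using ins_ord[of i n j q v] ins_ord[of j n i q v] by auto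
    next
      case False
      then show ?thesis by (auto simp: ins_def)
    qed
  qed
  have fA: "finite ?A" by (rule finite_subset[of _ "{1..n} \<times> {1..n}"]) auto
  have fC: "finite ?C" by simp
  have disj: "?A \<inter> (\<lambda>i. (i, Suc n)) ` ?C = {}" by auto
  have "card ((\<lambda>i. (i, Suc n)) ` ?C) = card ?C" by (rule card_image) (auto simp: inj_on_def)
  also have "card ?C = card (q ` ?C)"
    by (rule card_image[symmetric]) (use D(3) in \<open>auto simp: inj_on_def\<close>)
  also have "q ` ?C = {v..n}"
  proof
    show "q ` ?C \<subseteq> {v..n}" using D(1) by auto
    show "{v..n} \<subseteq> q ` ?C"
    proof
      fix x assume x: "x \<in> {v..n}"
      then have "x \<in> {1..n}" using v by auto
      then obtain i where "i \<in> {1..n}" "q i = x" using D(4) by blast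
      then show "x \<in> q ` ?C" using x by auto
    qed
  qed
  finally have c: "card ((\<lambda>i. (i, Suc n)) ` ?C) = Suc n - v" by simp
  show ?thesis unfolding inv_count_def eq
    by (subst card_Un_disjoint) (use fA fC disj c in auto)
qed

lemma lr_ins:
  assumes "1 \<le> j" "j \<le> n"
  shows "lr_max (ins n q v) j \<longleftrightarrow> lr_max q j"
  unfolding lr_max_def using assms ins_ord[of _ n j q v] by auto

lemma lr_ins_last:
  assumes q: "q \<in> perms n" and v: "v \<in> {1..Suc n}"
  shows "lr_max (ins n q v) (Suc n) \<longleftrightarrow> v = Suc n"
proof
  assume "v = Suc n" then show "lr_max (ins n q v) (Suc n)"
    using permD(1)[OF q] by (auto simp: lr_max_def ins_def less_Suc_eq_le)
next
  assume l: "lr_max (ins n q v) (Suc n)"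
  show "v = Suc n"
  proof (rule ccontr)
    assume "v \<noteq> Suc n"
    then have "v \<in> {1..n}" using v by auto
    then obtain i where "i \<in> {1..n}" "q i = v" using permD(4)[OF q] by blast
    moreover have "ins n q v i < ins n q v (Suc n)" using l \<open>i \<in> {1..n}\<close> unfolding lr_max_def by auto
    ultimately show False by (auto simp: ins_def)
  qed
qed

definition nolr :: "nat \<Rightarrow> nat \<Rightarrow> (nat \<Rightarrow> nat) \<Rightarrow> bool" where
  "nolr n k q \<longleftrightarrow> (\<forall>j'. k < j' \<and> j' \<le> n \<longrightarrow> \<not> lr_max q j')"

lemma nolr_ins:
  assumes q: "q \<in> perms n" and v: "v \<in> {1..Suc n}" and k: "k \<le> n"
  shows "nolr (Suc n) k (ins n q v) \<longleftrightarrow> v \<noteq> Suc n \<and> nolr n k q"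
proof -
  have "nolr (Suc n) k (ins n q v) \<longleftrightarrow> \<not> lr_max (ins n q v) (Suc n) \<and> nolr n k q"
    unfolding nolr_def using k lr_ins[of _ n q v] by (auto simp: le_Suc_eq)
  then show ?thesis using lr_ins_last[OF q v] by simp
qed

lemma ins_top:
  assumes q: "q \<in> perms n" and j: "1 \<le> j" "j \<le> n"
  shows "ins n q v j = Suc n \<longleftrightarrow> q j = n \<and> v \<le> n"
  using permD(1)[OF q, of j] j by (auto simp: ins_def)

lemma win_ins:
  assumes q: "q \<in> perms n" and v: "v \<in> {1..Suc n}" and k: "k \<le> n"
  shows "winnable (Suc n) k (ins n q v) \<longleftrightarrow> (v = Suc n \<and> nolr n k q) \<or> (v \<le> n \<and> winnable n k q)"
proof
  assume "winnable (Suc n) k (ins n q v)"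
  then obtain j where j: "k < j" "j \<le> Suc n" "lr_max (ins n q v) j" "ins n q v j = Suc n"
    and nj: "\<And>j'. k < j' \<and> j' < j \<Longrightarrow> \<not> lr_max (ins n q v) j'"
    unfolding winnable_def by blast
  show "(v = Suc n \<and> nolr n k q) \<or> (v \<le> n \<and> winnable n k q)"
  proof (cases "j = Suc n")
    case True
    then have "v = Suc n" using j(4) by (simp add: ins_def)
    moreover have "nolr n k q" unfolding nolr_def
      using nj True lr_ins[of _ n q v] k by auto
    ultimately show ?thesis by simp
  next
    case False
    then have jn: "j \<le> n" "1 \<le> j" using j by auto
    then have "q j = n" "v \<le> n" using ins_top[OF q jn(2) jn(1)] j(4) by auto
    moreover have "winnable n k q" unfolding winnable_def
      using j(1,3) jn \<open>q j = n\<close> nj lr_ins[of _ n q v] by (intro exI[of _ j]) auto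
    ultimately show ?thesis by simp
  qed
next
  assume "(v = Suc n \<and> nolr n k q) \<or> (v \<le> n \<and> winnable n k q)"
  then show "winnable (Suc n) k (ins n q v)"
  proof
    assume a: "v = Suc n \<and> nolr n k q"
    show ?thesis unfolding winnable_def
      apply (rule exI[of _ "Suc n"])
      using a k lr_ins_last[OF q v] lr_ins[of _ n q v] by (auto simp: ins_def nolr_def)
  next
    assume a: "v \<le> n \<and> winnable n k q"
    then obtain j where j: "k < j" "j \<le> n" "lr_max q j" "q j = n"
      and nj: "\<And>j'. k < j' \<and> j' < j \<Longrightarrow> \<not> lr_max q j'"
      unfolding winnable_def by blast
    show ?thesis unfolding winnable_def
      apply (rule exI[of _ j])
      using j nj a ins_top[OF q, of j v] lr_ins[of _ n q v] by auto
  qed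
qed



definition T :: "real \<Rightarrow> nat \<Rightarrow> real" where
  "T \<theta> n = (\<Sum>q\<in>perms n. \<theta> ^ inv_count n q)"
definition Bs :: "real \<Rightarrow> nat \<Rightarrow> nat \<Rightarrow> real" where
  "Bs \<theta> n k = (\<Sum>q\<in>perms n. if nolr n k q then \<theta> ^ inv_count n q else 0)"

lemma finite_perms: "finite (perms n)"
  unfolding perms_def by (rule finite_permutations) simp

lemma W_alt: "W \<theta> n k = (\<Sum>q\<in>perms n. if winnable n k q then \<theta> ^ inv_count n q else 0)"
  unfolding W_def by (rule sum.inter_filter[OF finite_perms])

lemma geo1: "(\<Sum>v\<in>{1..m}. (\<theta>::real) ^ (m - v)) = qint \<theta> m"
proof -
  have "(\<Sum>v\<in>{1..m}. \<theta> ^ (m - v)) = (\<Sum>i<m. \<theta> ^ (m - Suc i))"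
    using sum.atLeast1_atMost_eq[of "\<lambda>v. \<theta> ^ (m - v)" m] by simp
  also have "\<dots> = (\<Sum>i<m. \<theta> ^ i)" by (rule sum.nat_diff_reindex)
  finally show ?thesis by (simp add: qint_def)
qed

lemma geo2: "(\<Sum>v\<in>{1..n}. (\<theta>::real) ^ (Suc n - v)) = \<theta> * qint \<theta> n"
proof -
  have "(\<Sum>v\<in>{1..n}. \<theta> ^ (Suc n - v)) = (\<Sum>v\<in>{1..n}. \<theta> * \<theta> ^ (n - v))"
    by (rule sum.cong) (auto simp: Suc_diff_le)
  then show ?thesis using geo1[of \<theta> n] by (simp add: sum_distrib_left[symmetric])
qed

lemma geo1': "(\<Sum>v=Suc 0..m. (\<theta>::real) ^ (m - v)) = qint \<theta> m"
  using geo1[of \<theta> m] by simp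
lemma geo2': "(\<Sum>v=Suc 0..n. (\<theta>::real) ^ (Suc n - v)) = \<theta> * qint \<theta> n"
  using geo2[of \<theta> n] by simp
lemma qint_Suc: "qint \<theta> (Suc n) = 1 + \<theta> * qint \<theta> n"
  unfolding qint_def by (subst sum.lessThan_Suc_shift) (simp add: sum_distrib_left)

lemma pw_ins: assumes "q \<in> perms n" "v \<in> {1..Suc n}" shows
   "(\<theta>::real) ^ inv_count (Suc n) (ins n q v) = \<theta> ^ inv_count n q * \<theta> ^ (Suc n - v)"
proof -
  have "inv_count (Suc n) (ins n q v) = inv_count n q + (Suc n - v)" by (rule inv_ins[OF assms])
  then show ?thesis by (metis power_add)
qed

lemma T0: "T \<theta> 0 = 1"
proof -
  have "perms 0 = {id}" by (auto simp: perms_def)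
  moreover have "inv_count 0 id = card ({}::(nat\<times>nat) set)" unfolding inv_count_def
    by (rule arg_cong[where f=card]) auto
  ultimately show ?thesis by (simp add: T_def)
qed

lemma TSuc: "T \<theta> (Suc n) = qint \<theta> (Suc n) * T \<theta> n"
proof -
  have "T \<theta> (Suc n) = (\<Sum>q\<in>perms n. \<Sum>v\<in>{1..Suc n}. \<theta> ^ inv_count (Suc n) (ins n q v))"
    unfolding T_def by (rule decomp)
  also have "\<dots> = (\<Sum>q\<in>perms n. \<theta> ^ inv_count n q * (\<Sum>v\<in>{1..Suc n}. \<theta> ^ (Suc n - v)))"
    unfolding sum_distrib_left by (intro sum.cong refl) (simp add: pw_ins)
  also have "\<dots> = (\<Sum>q\<in>perms n. \<theta> ^ inv_count n q * qint \<theta> (Suc n))"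
    by (simp only: geo1)
  also have "\<dots> = qint \<theta> (Suc n) * T \<theta> n"
    unfolding T_def sum_distrib_left by (intro sum.cong refl) (simp add: mult.commute)
  finally show ?thesis .
qed

lemma Bs_top: "n \<le> k \<Longrightarrow> Bs \<theta> n k = T \<theta> n"
  by (auto simp: Bs_def T_def nolr_def intro!: sum.cong)

lemma BsSuc:
  assumes k: "k \<le> n"
  shows "Bs \<theta> (Suc n) k = \<theta> * qint \<theta> n * Bs \<theta> n k"
proof -
  have "Bs \<theta> (Suc n) k = (\<Sum>q\<in>perms n. \<Sum>v\<in>{1..Suc n}.
       if nolr (Suc n) k (ins n q v) then \<theta> ^ inv_count (Suc n) (ins n q v) else 0)"
    unfolding Bs_def by (rule decomp)
  also have "\<dots> = (\<Sum>q\<in>perms n. \<Sum>v\<in>{1..Suc n}.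
       if v \<noteq> Suc n \<and> nolr n k q then \<theta> ^ inv_count n q * \<theta> ^ (Suc n - v) else 0)"
    by (intro sum.cong refl) (simp add: nolr_ins[OF _ _ k] pw_ins)
  also have "\<dots> = (\<Sum>q\<in>perms n. (if nolr n k q then \<theta> ^ inv_count n q else 0) * (\<theta> * qint \<theta> n))"
  proof (rule sum.cong[OF refl])
    fix q assume "q \<in> perms n"
    have "(\<Sum>v\<in>{1..Suc n}. if v \<noteq> Suc n \<and> nolr n k q then \<theta> ^ inv_count n q * \<theta> ^ (Suc n - v) else 0)
       = (\<Sum>v\<in>{1..n}. if nolr n k q then \<theta> ^ inv_count n q * \<theta> ^ (Suc n - v) else 0)"
      by (simp add: sum.cl_ivl_Suc)
    also have "\<dots> = (if nolr n k q then \<theta> ^ inv_count n q else 0) * (\<theta> * qint \<theta> n)"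
      by (simp add: sum_distrib_left[symmetric] geo2')
    finally show "(\<Sum>v\<in>{1..Suc n}. if v \<noteq> Suc n \<and> nolr n k q then \<theta> ^ inv_count n q * \<theta> ^ (Suc n - v) else 0)
       = (if nolr n k q then \<theta> ^ inv_count n q else 0) * (\<theta> * qint \<theta> n)" .
  qed
  also have "\<dots> = \<theta> * qint \<theta> n * Bs \<theta> n k"
    unfolding Bs_def sum_distrib_left by (intro sum.cong refl) (simp add: mult.commute)
  finally show ?thesis .
qed

lemma WSuc:
  assumes k: "k \<le> n"
  shows "W \<theta> (Suc n) k = Bs \<theta> n k + \<theta> * qint \<theta> n * W \<theta> n k"
proof -
  have "W \<theta> (Suc n) k = (\<Sum>q\<in>perms n. \<Sum>v\<in>{1..Suc n}.
       if winnable (Suc n) k (ins n q v) then \<theta> ^ inv_count (Suc n) (ins n q v) else 0)"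
    unfolding W_alt by (rule decomp)
  also have "\<dots> = (\<Sum>q\<in>perms n. \<Sum>v\<in>{1..Suc n}.
       if (v = Suc n \<and> nolr n k q) \<or> (v \<le> n \<and> winnable n k q) then \<theta> ^ inv_count n q * \<theta> ^ (Suc n - v) else 0)"
    by (intro sum.cong refl) (simp add: win_ins[OF _ _ k] pw_ins)
  also have "\<dots> = (\<Sum>q\<in>perms n. (if nolr n k q then \<theta> ^ inv_count n q else 0)
       + (if winnable n k q then \<theta> ^ inv_count n q else 0) * (\<theta> * qint \<theta> n))"
  proof (rule sum.cong[OF refl])
    fix q assume "q \<in> perms n"
    have "(\<Sum>v\<in>{1..Suc n}. if (v = Suc n \<and> nolr n k q) \<or> (v \<le> n \<and> winnable n k q) then \<theta> ^ inv_count n q * \<theta> ^ (Suc n - v) else 0)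
       = (\<Sum>v\<in>{1..n}. if winnable n k q then \<theta> ^ inv_count n q * \<theta> ^ (Suc n - v) else 0)
         + (if nolr n k q then \<theta> ^ inv_count n q else 0)"
      by (simp add: sum.cl_ivl_Suc)
    also have "\<dots> = (if nolr n k q then \<theta> ^ inv_count n q else 0)
       + (if winnable n k q then \<theta> ^ inv_count n q else 0) * (\<theta> * qint \<theta> n)"
      by (simp add: sum_distrib_left[symmetric] geo2')
    finally show "(\<Sum>v\<in>{1..Suc n}. if (v = Suc n \<and> nolr n k q) \<or> (v \<le> n \<and> winnable n k q) then \<theta> ^ inv_count n q * \<theta> ^ (Suc n - v) else 0)
       = (if nolr n k q then \<theta> ^ inv_count n q else 0)
       + (if winnable n k q then \<theta> ^ inv_count n q else 0) * (\<theta> * qint \<theta> n)" .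
  qed
  also have "\<dots> = Bs \<theta> n k + \<theta> * qint \<theta> n * W \<theta> n k"
    unfolding Bs_def W_alt sum_distrib_left by (simp add: sum.distrib mult.commute)
  finally show ?thesis .
qed

lemma W_self: "W \<theta> k k = 0"
proof -
  have "{p\<in>perms k. winnable k k p} = {}" by (auto simp: winnable_def)
  then show ?thesis unfolding W_def by (metis sum.empty)
qed



lemma qfact_Suc: "qfact \<theta> (Suc n) = qfact \<theta> n * qint \<theta> (Suc n)"
  by (simp add: qfact_def)

lemma T_closed: "T \<theta> n = qfact \<theta> n"
  by (induction n) (simp_all add: T0 TSuc qfact_Suc qfact_def[of _ 0] mult.commute)

lemma qint_pos: assumes "\<theta> > 0" "i \<ge> 1" shows "qint \<theta> i > 0"
  unfolding qint_def using assms by (intro sum_pos) (auto simp: lessThan_empty_iff)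

lemma Bs_closed: "Bs \<theta> (k + m) k * qint \<theta> (k + m) = qint \<theta> k * \<theta> ^ m * qfact \<theta> (k + m)"
proof (induction m)
  case 0
  then show ?case by (simp add: Bs_top T_closed mult.commute)
next
  case (Suc m)
  have "Bs \<theta> (k + Suc m) k * qint \<theta> (k + Suc m) = \<theta> * qint \<theta> (k+m) * Bs \<theta> (k + m) k * qint \<theta> (Suc (k + m))"
    using BsSuc[of k "k+m" \<theta>] by simp
  also have "\<dots> = \<theta> * (Bs \<theta> (k + m) k * qint \<theta> (k+m)) * qint \<theta> (Suc (k + m))" by simp
  also have "\<dots> = qint \<theta> k * \<theta> ^ Suc m * qfact \<theta> (k + Suc m)"
    unfolding Suc.IH by (simp add: qfact_Suc)
  finally show ?case .
qed

lemma Bs0: "Bs \<theta> (Suc m) 0 = 0"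
proof (induction m)
  case 0 then show ?case using BsSuc[of 0 0 \<theta>] by (simp add: qint_def)
next
  case (Suc m) then show ?case using BsSuc[of 0 "Suc m" \<theta>] by simp
qed

lemma W0_closed: "W \<theta> (Suc m) 0 = \<theta> ^ m * qfact \<theta> m"
proof (induction m)
  case 0
  then show ?case using WSuc[of 0 0 \<theta>] by (simp add: Bs_top T0 qfact_def W_self)
next
  case (Suc m)
  then show ?case using WSuc[of 0 "Suc m" \<theta>] by (simp add: Bs0 qfact_Suc)
qed

lemma Wk_closed:
  assumes th: "\<theta> > 0" and k: "k \<ge> 1"
  shows "W \<theta> (Suc (k + m)) k = \<theta> ^ m * qfact \<theta> (k + m) * (\<Sum>i=k..k+m. qint \<theta> k / qint \<theta> i)"
proof (induction m)
  case 0
  have "qint \<theta> k > 0" using qint_pos[OF th k] .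
  then show ?case using WSuc[of k k \<theta>] by (simp add: Bs_top T_closed W_self)
next
  case (Suc m)
  have p: "qint \<theta> (Suc (k + m)) > 0" using qint_pos[OF th] by simp
  have B: "Bs \<theta> (Suc (k + m)) k = qint \<theta> k * \<theta> ^ Suc m * qfact \<theta> (Suc (k + m)) / qint \<theta> (Suc (k + m))"
    using Bs_closed[of \<theta> k "Suc m"] p by (simp add: field_simps)
  have "W \<theta> (Suc (k + Suc m)) k = Bs \<theta> (Suc (k + m)) k + \<theta> * qint \<theta> (Suc (k + m)) * W \<theta> (Suc (k + m)) k"
    using WSuc[of k "Suc (k+m)" \<theta>] by simp
  also have "\<dots> = \<theta> ^ Suc m * qfact \<theta> (Suc (k + m)) * (qint \<theta> k / qint \<theta> (Suc (k + m))
      + (\<Sum>i=k..k+m. qint \<theta> k / qint \<theta> i))"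
    unfolding B Suc.IH using p by (simp add: qfact_Suc field_simps)
  also have "\<dots> = \<theta> ^ Suc m * qfact \<theta> (k + Suc m) * (\<Sum>i=k..k+Suc m. qint \<theta> k / qint \<theta> i)"
    by simp
  finally show ?case .
qed

theorem corollary6p4:
  fixes \<theta> :: real
  assumes "\<theta> > 0"
  shows "(\<forall>N\<ge>1. W \<theta> N 0 = \<theta> ^ (N - 1) * qfact \<theta> (N - 1))
       \<and> (\<forall>N\<ge>2. \<forall>k. 1 \<le> k \<and> k \<le> N - 1 \<longrightarrow>
            W \<theta> N k = \<theta> ^ (N - k - 1) * qfact \<theta> (N - 1) *
              (\<Sum>i=k..N-1. qint \<theta> k / qint \<theta> i))"
proof (intro conjI allI impI)
  fix N :: nat assume "N \<ge> 1"
  then obtain m where "N = Suc m" by (cases N) auto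
  then show "W \<theta> N 0 = \<theta> ^ (N - 1) * qfact \<theta> (N - 1)" by (simp add: W0_closed)
next
  fix N k :: nat assume "N \<ge> 2" "1 \<le> k \<and> k \<le> N - 1"
  define m where "m = N - k - 1"
  have N: "N = Suc (k + m)" using \<open>N \<ge> 2\<close> \<open>1 \<le> k \<and> k \<le> N - 1\<close> unfolding m_def by linarith
  then show "W \<theta> N k = \<theta> ^ (N - k - 1) * qfact \<theta> (N - 1) * (\<Sum>i=k..N-1. qint \<theta> k / qint \<theta> i)"
    using Wk_closed[OF assms, of k m] \<open>1 \<le> k \<and> k \<le> N - 1\<close> by simp
qed

end
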